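(* Let $s$ be a positive integer and let $G$ be an $n$-vertex $K_{s,s}$-free graph. If $e(G)>6^s s\cdot n^{3/2}$, then the number of induced copies of the $4$-cycle $C_4$ in $G$ is at least $\frac{e(G)^4}{16n^4}$.
   Context: $G$ is $K_{s,s}$-free if it contains no copy of $K_{s,s}$ as a subgraph. An induced copy of $C_4$ is a set of four vertices $u,x,v,y$ with $ux,xv,vy,yu\in E(G)$ and $uv,xy\notin E(G)$ (counted as unlabeled subgraphs). *)

theory Defs
  imports Complex_Main
begin

definition simple_graph :: "'a set \<Rightarrow> 'a set set \<Rightarrow> bool" where
  "simple_graph V E \<longleftrightarrow> finite V \<and> (\<forall>e\<in>E. e \<subseteq> V \<and> card e = 2)"

abbreviation adj :: "'a set set \<Rightarrow> 'a \<Rightarrow> 'a \<Rightarrow> bool" where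
  "adj E u v \<equiv> {u, v} \<in> E"

definition Kss_free :: "'a set \<Rightarrow> 'a set set \<Rightarrow> nat \<Rightarrow> bool" where
  "Kss_free V E s \<longleftrightarrow> \<not> (\<exists>A B. A \<subseteq> V \<and> B \<subseteq> V \<and> A \<inter> B = {} \<and>
       card A = s \<and> card B = s \<and> (\<forall>a\<in>A. \<forall>b\<in>B. adj E a b))"

text \<open>Induced 4-cycles, counted as unlabeled subgraphs, i.e. as 4-vertex sets
  {u,x,v,y} with ux, xv, vy, yu edges and uv, xy non-edges.\<close>
definition induced_C4s :: "'a set \<Rightarrow> 'a set set \<Rightarrow> 'a set set" where
  "induced_C4s V E = {S. \<exists>u x v y. S = {u, x, v, y} \<and> card S = 4 \<and>
      u \<in> V \<and> x \<in> V \<and> v \<in> V \<and> y \<in> V \<and>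
      adj E u x \<and> adj E x v \<and> adj E v y \<and> adj E y u \<and>
      \<not> adj E u v \<and> \<not> adj E x y}"

definition num_induced_C4 :: "'a set \<Rightarrow> 'a set set \<Rightarrow> nat" where
  "num_induced_C4 V E = card (induced_C4s V E)"

end

theory Submission
  imports Defs
begin


lemma choose_step: "(n choose Suc k) * Suc k = (n choose k) * (n - k)"
  using binomial_absorb_comp[of n k] times_binomial_minus1_eq[of "Suc k" n]
  by (simp add: mult.commute)

lemma choose_ratio:
  fixes c t k :: nat
  assumes "2*k \<le> t" "t \<le> c"
  shows "(c choose k) * t^k \<le> (2*c)^k * (t choose k)"
  using assms
proof (induction k)
  case 0 then show ?case by simp
next
  case (Suc k)
  have IH: "(c choose k) * t^k \<le> (2*c)^k * (t choose k)" using Suc by simp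
  have k1: "k \<le> c" "k \<le> t" using Suc.prems by auto
  have a1: "k*(2*c) \<le> c*t" using mult_le_mono1[of "2*k" t c] Suc.prems by (simp add: mult.commute mult.left_commute)
  have h1: "(c - k) * t + k * t = c * t" using k1 by (metis add_mult_distrib le_add_diff_inverse2)
  have h2: "2*c*(t - k) + 2*c*k = 2*c*t" using k1 by (metis add_mult_distrib2 le_add_diff_inverse2)
  have key: "(c - k) * t \<le> 2*c*(t - k)" using h1 h2 a1 by (simp only: mult.commute mult.left_commute)
  have "(c choose Suc k) * t^(Suc k) * Suc k = ((c choose Suc k) * Suc k) * t^(Suc k)"
    by (simp only: ac_simps)
  also have "\<dots> = ((c choose k) * (c - k)) * t^(Suc k)" by (simp only: choose_step)
  also have "\<dots> = ((c choose k) * t^k) * ((c - k) * t)" by (simp add: ac_simps)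
  also have "\<dots> \<le> ((2*c)^k * (t choose k)) * (2*c*(t - k))"
    by (intro mult_le_mono IH key)
  also have "\<dots> = (2*c)^(Suc k) * ((t choose k) * (t - k))" by (simp add: ac_simps)
  also have "\<dots> = (2*c)^(Suc k) * ((t choose Suc k) * Suc k)" by (simp only: choose_step)
  finally have X: "(c choose Suc k) * t^(Suc k) * Suc k \<le> (2*c)^(Suc k) * (t choose Suc k) * Suc k"
    by (simp only: mult.assoc)
  then show ?case by (simp only: mult_le_cancel2)
qed

lemma kst_sum:
  fixes C :: "'a set" and R :: "'a \<Rightarrow> 'a \<Rightarrow> bool" and k :: nat
  assumes fin: "finite C" and k: "k \<ge> 1"
    and sym: "\<And>x y. R x y \<Longrightarrow> R y x"
    and free: "\<And>Z. Z \<subseteq> C \<Longrightarrow> card Z = k \<Longrightarrow> card {y\<in>C. \<forall>z\<in>Z. R z y} \<le> k"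
  shows "real (\<Sum>x\<in>C. card {y\<in>C. R x y}) \<le> real (card C)^2/8 + real ((k+1) * 16^(k+1)) * real (card C)"
proof -
  define d where "d x = card {y\<in>C. R x y}" for x
  define c where "c = card C"
  have dle: "d x \<le> c" for x unfolding d_def c_def by (rule card_mono[OF fin]) auto
  define Zs where "Zs = {Z. Z \<subseteq> C \<and> card Z = k}"
  have finZs: "finite Zs" unfolding Zs_def using fin by (rule rev_finite_subset[OF finite_Pow_iff[THEN iffD2]]) auto
  have cardZs: "card Zs = c choose k" unfolding Zs_def c_def using n_subsets[OF fin] .
  have step1: "(\<Sum>x\<in>C. d x choose k) \<le> k * (c choose k)"
  proof -
    have e1: "d x choose k = (\<Sum>Z\<in>Zs. (of_bool (\<forall>z\<in>Z. R x z) :: nat))" if "x \<in> C" for x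
    proof -
      have "d x choose k = card {Z. Z \<subseteq> {y\<in>C. R x y} \<and> card Z = k}"
        unfolding d_def using n_subsets[of "{y\<in>C. R x y}" k] fin by simp
      also have "{Z. Z \<subseteq> {y\<in>C. R x y} \<and> card Z = k} = Zs \<inter> {Z. \<forall>z\<in>Z. R x z}"
        unfolding Zs_def by auto
      also have "card \<dots> = (\<Sum>Z\<in>Zs. (of_bool (\<forall>z\<in>Z. R x z) :: nat))"
        using finZs by simp
      finally show ?thesis .
    qed
    have "(\<Sum>x\<in>C. d x choose k) = (\<Sum>x\<in>C. \<Sum>Z\<in>Zs. (of_bool (\<forall>z\<in>Z. R x z) :: nat))"
      using e1 by (rule sum.cong[OF refl])
    also have "\<dots> = (\<Sum>Z\<in>Zs. \<Sum>x\<in>C. (of_bool (\<forall>z\<in>Z. R x z) :: nat))"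
      by (rule sum.swap)
    also have "\<dots> \<le> (\<Sum>Z\<in>Zs. k)"
    proof (rule sum_mono)
      fix Z assume "Z \<in> Zs"
      then have Z: "Z \<subseteq> C" "card Z = k" unfolding Zs_def by auto
      have "(\<Sum>x\<in>C. (of_bool (\<forall>z\<in>Z. R x z) :: nat)) = card (C \<inter> {x. \<forall>z\<in>Z. R x z})"
        using fin by simp
      also have "C \<inter> {x. \<forall>z\<in>Z. R x z} = {y\<in>C. \<forall>z\<in>Z. R z y}" using sym by blast
      also have "card \<dots> \<le> k" using free Z by blast
      finally show "(\<Sum>x\<in>C. (of_bool (\<forall>z\<in>Z. R x z) :: nat)) \<le> k" .
    qed
    also have "\<dots> = k * (c choose k)" using cardZs by simp
    finally show ?thesis .
  qed
  have goal_nat: "(\<Sum>x\<in>C. d x) \<le> k * 16^k * c + c * (c div 8)"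
  proof (cases "c < 16 * k")
    case True
    have "(\<Sum>x\<in>C. d x) \<le> (\<Sum>x\<in>C. c)" by (rule sum_mono) (rule dle)
    also have "\<dots> = c * c" unfolding c_def by simp
    also have "\<dots> \<le> (16 * k) * c" using True by simp
    also have "16 * k \<le> k * 16^k"
    proof -
      have "16 \<le> (16::nat)^k" using k by (metis power_one_right power_increasing one_le_numeral) 
      then show ?thesis by (simp add: mult.commute)
    qed
    finally show ?thesis by (simp add: mult.commute)
  next
    case False
    define t where "t = c div 8 + 1"
    have t1: "2 * k \<le> t" using False unfolding t_def by linarith
    have t2: "t \<le> c" using False k unfolding t_def by linarith
    have t3: "2 * c < 16 * t" unfolding t_def by presburger
    define T where "T = {x\<in>C. t \<le> d x}"
    have finT: "finite T" unfolding T_def using fin by simp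
    have "card T * (t choose k) = (\<Sum>x\<in>T. t choose k)" by simp
    also have "\<dots> \<le> (\<Sum>x\<in>T. d x choose k)"
      by (rule sum_mono) (auto simp: T_def intro: binomial_right_mono)
    also have "\<dots> \<le> (\<Sum>x\<in>C. d x choose k)"
      by (rule sum_mono2[OF fin]) (auto simp: T_def)
    also have "\<dots> \<le> k * (c choose k)" by (rule step1)
    finally have A: "card T * (t choose k) \<le> k * (c choose k)" .
    have "card T * t^k * (t choose k) = (card T * (t choose k)) * t^k" by (simp add: ac_simps)
    also have "\<dots> \<le> (k * (c choose k)) * t^k" using A by simp
    also have "\<dots> = k * ((c choose k) * t^k)" by (simp add: ac_simps)
    also have "\<dots> \<le> k * ((2*c)^k * (t choose k))" using choose_ratio[OF t1 t2] by simp
    finally have B: "card T * t^k * (t choose k) \<le> k * (2*c)^k * (t choose k)" by (simp add: ac_simps)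
    have tk: "0 < t choose k" using t1 by simp
    have B2: "card T * t^k \<le> k * (2*c)^k" using B tk by (simp only: mult_le_cancel2)
    have "(2*c)^k \<le> (16*t)^k" using t3 by (intro power_mono) simp_all
    then have "k * (2*c)^k \<le> k * (16*t)^k" by (rule mult_le_mono2)
    also have "\<dots> = k * 16^k * t^k" by (simp add: power_mult_distrib)
    finally have "card T * t^k \<le> k * 16^k * t^k" using B2 by linarith
    then have cT: "card T \<le> k * 16^k" using t1 k by (simp only: mult_le_cancel2) simp
    have "(\<Sum>x\<in>C. d x) = (\<Sum>x\<in>T. d x) + (\<Sum>x\<in>C - T. d x)"
      using fin by (metis (no_types, lifting) T_def mem_Collect_eq subsetI sum.subset_diff add.commute)
    also have "(\<Sum>x\<in>T. d x) \<le> (\<Sum>x\<in>T. c)" by (rule sum_mono) (rule dle)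
    also have "\<dots> = card T * c" by simp
    also have "\<dots> \<le> k * 16^k * c" using cT by simp
    also have "(\<Sum>x\<in>C - T. d x) \<le> (\<Sum>x\<in>C - T. c div 8)"
      by (rule sum_mono) (auto simp: T_def t_def)
    also have "\<dots> = card (C - T) * (c div 8)" by simp
    also have "\<dots> \<le> c * (c div 8)" unfolding c_def by (simp add: card_mono fin)
    finally show ?thesis by simp
  qed
  have "real (\<Sum>x\<in>C. d x) \<le> real (k * 16^k * c) + real c * real (c div 8)"
    using goal_nat by (metis of_nat_add of_nat_le_iff of_nat_mult)
  also have "real c * real (c div 8) \<le> real c * (real c / 8)"
    by (intro mult_left_mono) (simp_all add: real_of_nat_div)
  also have "real (k * 16^k * c) \<le> real ((k+1) * 16^(k+1)) * real c"
  proof -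
    have "k * 16^k \<le> (k+1) * 16^(k+1)" by (intro mult_le_mono) simp_all
    then show ?thesis by (metis mult_le_mono1 of_nat_le_iff of_nat_mult)
  qed
  finally show ?thesis unfolding d_def c_def by (simp add: power2_eq_square)
qed



locale sgraph =
  fixes V :: "'a set" and E :: "'a set set"
  assumes sg: "simple_graph V E"
begin

lemma finV: "finite V" using sg unfolding simple_graph_def by auto

lemma adj_in: "adj E u v \<Longrightarrow> u \<in> V \<and> v \<in> V"
  using sg unfolding simple_graph_def by auto

lemma adj_ne: "adj E u v \<Longrightarrow> u \<noteq> v"
  using sg unfolding simple_graph_def by fastforce

lemma adj_sym: "adj E u v = adj E v u"
  by (simp add: insert_commute)

lemma finE: "finite E"
proof -
  have "E \<subseteq> Pow V" using sg unfolding simple_graph_def by auto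
  then show ?thesis using finV by (meson finite_Pow_iff rev_finite_subset)
qed

definition cnb :: "'a \<Rightarrow> 'a \<Rightarrow> 'a set" where
  "cnb u v = {w\<in>V. adj E u w \<and> adj E v w}"

definition deg :: "'a \<Rightarrow> nat" where
  "deg u = card {w\<in>V. adj E u w}"

lemma fin_cnb: "finite (cnb u v)" unfolding cnb_def using finV by simp

lemma cnb_free:
  assumes free: "Kss_free V E s" and s: "s \<ge> 2"
    and Z: "Z \<subseteq> cnb u v" "card Z = s - 1"
  shows "card {y\<in>cnb u v. \<forall>z\<in>Z. adj E z y} \<le> s - 1"
proof (rule ccontr)
  assume "\<not> ?thesis"
  then have "s \<le> card {y\<in>cnb u v. \<forall>z\<in>Z. adj E z y}" by simp
  then obtain B where B: "B \<subseteq> {y\<in>cnb u v. \<forall>z\<in>Z. adj E z y}" "card B = s"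
    by (meson obtain_subset_with_card_n)
  have "Z \<noteq> {}" using Z s by auto
  then obtain z0 where "z0 \<in> Z" by auto
  then have uV: "u \<in> V" using Z adj_in unfolding cnb_def by blast
  have uZ: "u \<notin> Z" using Z adj_ne unfolding cnb_def by blast
  have finZ: "finite Z" using Z fin_cnb finite_subset by blast
  define A where "A = insert u Z"
  have cA: "card A = s" unfolding A_def using uZ finZ Z s by simp
  have AV: "A \<subseteq> V" unfolding A_def using uV Z unfolding cnb_def by auto
  have BV: "B \<subseteq> V" using B unfolding cnb_def by auto
  have disj: "A \<inter> B = {}"
  proof -
    have "u \<notin> B" using B adj_ne unfolding cnb_def by blast
    moreover have "z \<notin> B" if "z \<in> Z" for z using B that adj_ne by blast
    ultimately show ?thesis unfolding A_def by blast
  qed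
  have all: "\<forall>a\<in>A. \<forall>b\<in>B. adj E a b"
    using B unfolding A_def cnb_def by auto
  show False using free AV BV disj cA B(2) all unfolding Kss_free_def by blast
qed

lemma pair_bound:
  assumes free: "Kss_free V E s" and s: "s \<ge> 2"
  shows "real (\<Sum>x\<in>cnb u v. card {y\<in>cnb u v. adj E x y})
     \<le> real (card (cnb u v))^2/8 + real (s * 16^s) * real (card (cnb u v))"
proof -
  have "real (\<Sum>x\<in>cnb u v. card {y\<in>cnb u v. adj E x y})
     \<le> real (card (cnb u v))^2/8 + real ((s - 1 + 1) * 16^(s - 1 + 1)) * real (card (cnb u v))"
    apply (rule kst_sum[OF fin_cnb, of "s - 1" "adj E"])
    using s apply simp
     apply (simp add: insert_commute)
    using cnb_free[OF free s] by blast
  then show ?thesis using s by simp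
qed

end


lemma cs_sum:
  fixes f :: "'b \<Rightarrow> real"
  assumes "finite A"
  shows "(\<Sum>a\<in>A. f a)^2 \<le> real (card A) * (\<Sum>a\<in>A. (f a)^2)"
proof (cases "A = {}")
  case True then show ?thesis by simp
next
  case False
  define k where "k = real (card A)"
  have k: "k > 0" using False assms unfolding k_def by (simp add: card_gt_0_iff)
  define m where "m = (\<Sum>a\<in>A. f a) / k"
  have "0 \<le> (\<Sum>a\<in>A. (f a - m)^2)" by (intro sum_nonneg) simp
  also have "\<dots> = (\<Sum>a\<in>A. (f a)^2 - 2*m*f a + m^2)"
    by (rule sum.cong) (simp_all add: power2_diff)
  also have "\<dots> = (\<Sum>a\<in>A. (f a)^2) - 2*m*(\<Sum>a\<in>A. f a) + k * m^2"
    by (simp add: sum.distrib sum_subtractf sum_distrib_left k_def)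
  also have "\<dots> = (\<Sum>a\<in>A. (f a)^2) - (\<Sum>a\<in>A. f a)^2 / k"
    using k by (simp add: m_def field_simps power2_eq_square)
  finally have "(\<Sum>a\<in>A. f a)^2 / k \<le> (\<Sum>a\<in>A. (f a)^2)" by simp
  then show ?thesis using k by (simp add: k_def divide_le_eq mult.commute)
qed

lemma sum_ofbool_ne:
  fixes g :: "'b \<Rightarrow> real"
  assumes "finite V" "u \<in> V"
  shows "(\<Sum>v\<in>V. of_bool (u \<noteq> v) * g v) = (\<Sum>v\<in>V. g v) - g u"
proof -
  have "(\<Sum>v\<in>V. of_bool (u \<noteq> v) * g v) = (\<Sum>v\<in>V \<inter> {v. u \<noteq> v}. g v)"
    by (rule sum_of_bool_mult_eq[OF assms(1)])
  also have "V \<inter> {v. u \<noteq> v} = V - {u}" by auto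
  also have "(\<Sum>v\<in>V - {u}. g v) = (\<Sum>v\<in>V. g v) - g u"
    using sum.remove[OF assms, of g] by simp
  finally show ?thesis .
qed

lemma card_if_empty: "real (card (if P then A else {})) = of_bool P * real (card A)"
  by simp

lemma card4:
  assumes "finite V" "\<And>u v. finite (F u v)"
  shows "card {(u,v,x,y). u\<in>V \<and> v\<in>V \<and> (x,y) \<in> F u v} = (\<Sum>u\<in>V. \<Sum>v\<in>V. card (F u v))"
proof -
  have "{(u,v,x,y). u\<in>V \<and> v\<in>V \<and> (x,y) \<in> F u v} = Sigma V (\<lambda>u. Sigma V (\<lambda>v. F u v))"
    by auto
  then show ?thesis using assms by simp
qed

context sgraph
begin

lemma handshake: "2 * card E \<le> (\<Sum>u\<in>V. deg u)"
proof -
  define Pairs where "Pairs = {(u,w). u\<in>V \<and> w\<in>V \<and> adj E u w}"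
  have "Pairs = Sigma V (\<lambda>u. {w\<in>V. adj E u w})" unfolding Pairs_def by auto
  then have c1: "card Pairs = (\<Sum>u\<in>V. deg u)" unfolding deg_def using finV by simp
  have "Pairs = (\<Union>e\<in>E. {(u,w). {u,w} = e})"
    unfolding Pairs_def using sg unfolding simple_graph_def by auto
  moreover have two: "card {(u,w). {u,w} = e} = 2" if "e \<in> E" for e
  proof -
    have "card e = 2" using sg that unfolding simple_graph_def by auto
    then obtain a b where ab: "e = {a,b}" "a \<noteq> b" by (meson card_2_iff)
    have "{(u,w). {u,w} = e} = {(a,b),(b,a)}" using ab by (auto simp: doubleton_eq_iff)
    then show ?thesis using ab by simp
  qed
  moreover have "card (\<Union>e\<in>E. {(u,w). {u,w} = e}) = (\<Sum>e\<in>E. card {(u,w). {u,w} = e})"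
  proof (rule card_UN_disjoint[OF finE])
    show "\<forall>e\<in>E. finite {(u,w). {u,w} = e}" using two by (metis card.infinite zero_neq_numeral)
    show "\<forall>e\<in>E. \<forall>e'\<in>E. e \<noteq> e' \<longrightarrow> {(u,w). {u,w} = e} \<inter> {(u,w). {u,w} = e'} = {}" by auto
  qed
  ultimately have "card Pairs = 2 * card E" by simp
  then show ?thesis using c1 by simp
qed

abbreviation cn where "cn u v \<equiv> card (cnb u v)"

lemma cn_sum: "real (cn u v) = (\<Sum>w\<in>V. of_bool (adj E u w) * of_bool (adj E v w))"
proof -
  have "real (cn u v) = (\<Sum>w\<in>V. of_bool (adj E u w \<and> adj E v w))"
    using finV unfolding cnb_def by (simp add: Int_def conj_commute)
  then show ?thesis by (simp add: of_bool_conj)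
qed

lemma deg_sum: "real (deg w) = (\<Sum>u\<in>V. of_bool (adj E u w))"
proof -
  have "real (deg w) = (\<Sum>u\<in>V. of_bool (adj E w u))"
    using finV unfolding deg_def by (simp add: Int_def conj_commute)
  then show ?thesis by (simp add: insert_commute)
qed

lemma P_eq: "(\<Sum>u\<in>V. \<Sum>v\<in>V. of_bool (u \<noteq> v) * real (cn u v))
   = (\<Sum>w\<in>V. real (deg w)^2) - (\<Sum>w\<in>V. real (deg w))"
proof -
  have "(\<Sum>u\<in>V. \<Sum>v\<in>V. real (cn u v))
      = (\<Sum>u\<in>V. \<Sum>v\<in>V. \<Sum>w\<in>V. of_bool (adj E u w) * of_bool (adj E v w))"
    by (simp add: cn_sum)
  also have "\<dots> = (\<Sum>u\<in>V. \<Sum>w\<in>V. \<Sum>v\<in>V. of_bool (adj E u w) * of_bool (adj E v w))"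
    by (rule sum.cong[OF refl], rule sum.swap)
  also have "\<dots> = (\<Sum>w\<in>V. \<Sum>u\<in>V. \<Sum>v\<in>V. of_bool (adj E u w) * of_bool (adj E v w))"
    by (rule sum.swap)
  also have "\<dots> = (\<Sum>w\<in>V. (\<Sum>u\<in>V. of_bool (adj E u w)) * (\<Sum>v\<in>V. of_bool (adj E v w)))"
    by (simp add: sum_product)
  also have "\<dots> = (\<Sum>w\<in>V. real (deg w)^2)"
    by (simp add: deg_sum power2_eq_square)
  finally have A: "(\<Sum>u\<in>V. \<Sum>v\<in>V. real (cn u v)) = (\<Sum>w\<in>V. real (deg w)^2)" .
  have cuu: "cn u u = deg u" for u unfolding cnb_def deg_def by simp
  have "(\<Sum>u\<in>V. \<Sum>v\<in>V. of_bool (u \<noteq> v) * real (cn u v))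
      = (\<Sum>u\<in>V. (\<Sum>v\<in>V. real (cn u v)) - real (deg u))"
    by (rule sum.cong[OF refl]) (simp add: sum_ofbool_ne[OF finV] cuu)
  also have "\<dots> = (\<Sum>w\<in>V. real (deg w)^2) - (\<Sum>w\<in>V. real (deg w))"
    by (simp add: sum_subtractf A)
  finally show ?thesis .
qed

end


context sgraph
begin

definition ND where "ND u v = {(x,y). x \<in> cnb u v \<and> y \<in> cnb u v \<and> x \<noteq> y}"
definition AD where "AD u v = {(x,y). x \<in> cnb u v \<and> y \<in> cnb u v \<and> adj E x y}"
definition GD where "GD u v = {(x,y). x \<in> cnb u v \<and> y \<in> cnb u v \<and> x \<noteq> y \<and> \<not> adj E x y}"

lemma fin_ND: "finite (ND u v)"
  by (rule finite_subset[of _ "cnb u v \<times> cnb u v"]) (auto simp: ND_def fin_cnb)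
lemma fin_AD: "finite (AD u v)"
  by (rule finite_subset[of _ "cnb u v \<times> cnb u v"]) (auto simp: AD_def fin_cnb)
lemma fin_GD: "finite (GD u v)"
  by (rule finite_subset[of _ "cnb u v \<times> cnb u v"]) (auto simp: GD_def fin_cnb)

lemma card_ND: "real (card (ND u v)) = real (cn u v)^2 - real (cn u v)"
proof -
  have "ND u v = Sigma (cnb u v) (\<lambda>x. cnb u v - {x})" unfolding ND_def by auto
  then have "card (ND u v) = (\<Sum>x\<in>cnb u v. card (cnb u v - {x}))" using fin_cnb by simp
  also have "\<dots> = (\<Sum>x\<in>cnb u v. cn u v - 1)" by (rule sum.cong) (simp_all add: fin_cnb)
  also have "\<dots> = cn u v * (cn u v - 1)" by simp
  finally have "card (ND u v) = cn u v * (cn u v - 1)" .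
  then show ?thesis
    by (cases "cn u v") (simp_all add: power2_eq_square algebra_simps)
qed

lemma card_AD: "card (AD u v) = (\<Sum>x\<in>cnb u v. card {y\<in>cnb u v. adj E x y})"
proof -
  have "AD u v = Sigma (cnb u v) (\<lambda>x. {y\<in>cnb u v. adj E x y})" unfolding AD_def by auto
  then show ?thesis using fin_cnb by simp
qed

lemma card_GD: "real (card (GD u v)) = real (card (ND u v)) - real (card (AD u v))"
proof -
  have "ND u v = GD u v \<union> AD u v" unfolding ND_def GD_def AD_def using adj_ne by auto
  moreover have "GD u v \<inter> AD u v = {}" unfolding GD_def AD_def by auto
  ultimately have "card (ND u v) = card (GD u v) + card (AD u v)"
    using fin_GD fin_AD by (simp add: card_Un_disjoint)
  then show ?thesis by simp
qed

definition Qset where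
  "Qset = {(u,v,x,y). u\<in>V \<and> v\<in>V \<and> (x,y) \<in> (if u \<noteq> v \<and> \<not> adj E u v then GD u v else {})}"
definition Xset where
  "Xset = {(u,v,x,y). u\<in>V \<and> v\<in>V \<and> (x,y) \<in> (if adj E u v then ND u v else {})}"
definition Yset where
  "Yset = {(u,v,x,y). u\<in>V \<and> v\<in>V \<and> (x,y) \<in> (if u \<noteq> v then AD u v else {})}"

lemma card_Qset: "real (card Qset) = (\<Sum>u\<in>V. \<Sum>v\<in>V. of_bool (u \<noteq> v \<and> \<not> adj E u v) * real (card (GD u v)))"
  unfolding Qset_def apply (subst card4[OF finV])
   apply (simp add: fin_GD)
  apply (simp only: of_nat_sum card_if_empty)
  done

lemma card_Xset: "real (card Xset) = (\<Sum>u\<in>V. \<Sum>v\<in>V. of_bool (adj E u v) * real (card (ND u v)))"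
  unfolding Xset_def apply (subst card4[OF finV])
   apply (simp add: fin_ND)
  apply (simp only: of_nat_sum card_if_empty)
  done

lemma card_Yset: "real (card Yset) = (\<Sum>u\<in>V. \<Sum>v\<in>V. of_bool (u \<noteq> v) * real (card (AD u v)))"
  unfolding Yset_def apply (subst card4[OF finV])
   apply (simp add: fin_AD)
  apply (simp only: of_nat_sum card_if_empty)
  done

lemma XY: "card Xset = card Yset"
proof -
  define f where "f = (\<lambda>(u::'a,v::'a,x::'a,y::'a). (x,y,u,v))"
  have inj: "inj_on f Xset" unfolding f_def inj_on_def by auto
  have "f ` Xset = Yset"
  proof
    show "f ` Xset \<subseteq> Yset"
      unfolding f_def Xset_def Yset_def ND_def AD_def cnb_def
      using adj_in by (auto simp: insert_commute split: if_splits)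
    show "Yset \<subseteq> f ` Xset"
    proof
      fix q assume q: "q \<in> Yset"
      obtain x y u v where qq: "q = (x,y,u,v)" by (cases q) auto
      have "(u,v,x,y) \<in> Xset" using q adj_in unfolding qq Xset_def Yset_def ND_def AD_def cnb_def
        by (auto simp: insert_commute split: if_splits)
      moreover have "q = f (u,v,x,y)" unfolding qq f_def by simp
      ultimately show "q \<in> f ` Xset" by blast
    qed
  qed
  then show ?thesis using card_image[OF inj] by simp
qed

end


context sgraph
begin

lemma count_bound:
  "real (card Qset) \<ge> (\<Sum>u\<in>V. \<Sum>v\<in>V. of_bool (u \<noteq> v) * real (cn u v)^2)
     - (\<Sum>u\<in>V. \<Sum>v\<in>V. of_bool (u \<noteq> v) * real (cn u v))
     - 2 * (\<Sum>u\<in>V. \<Sum>v\<in>V. of_bool (u \<noteq> v) * real (card (AD u v)))"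
proof -
  have pw: "of_bool (u \<noteq> v \<and> \<not> adj E u v) * real (card (GD u v)) \<ge>
     of_bool (u \<noteq> v) * real (cn u v)^2 - of_bool (u \<noteq> v) * real (cn u v)
     - of_bool (u \<noteq> v) * real (card (AD u v)) - of_bool (adj E u v) * real (card (ND u v))" for u v
    using card_GD[of u v] card_ND[of u v] adj_ne[of u v] by (cases "adj E u v"; cases "u = v") auto
  have "real (card Qset) \<ge> (\<Sum>u\<in>V. \<Sum>v\<in>V.
     of_bool (u \<noteq> v) * real (cn u v)^2 - of_bool (u \<noteq> v) * real (cn u v)
     - of_bool (u \<noteq> v) * real (card (AD u v)) - of_bool (adj E u v) * real (card (ND u v)))"
    unfolding card_Qset by (intro sum_mono) (rule pw)
  also have "(\<Sum>u\<in>V. \<Sum>v\<in>V.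
     of_bool (u \<noteq> v) * real (cn u v)^2 - of_bool (u \<noteq> v) * real (cn u v)
     - of_bool (u \<noteq> v) * real (card (AD u v)) - of_bool (adj E u v) * real (card (ND u v)))
     = (\<Sum>u\<in>V. \<Sum>v\<in>V. of_bool (u \<noteq> v) * real (cn u v)^2)
     - (\<Sum>u\<in>V. \<Sum>v\<in>V. of_bool (u \<noteq> v) * real (cn u v))
     - (\<Sum>u\<in>V. \<Sum>v\<in>V. of_bool (u \<noteq> v) * real (card (AD u v)))
     - real (card Xset)"
    unfolding card_Xset by (simp add: sum_subtractf)
  also have "real (card Xset) = (\<Sum>u\<in>V. \<Sum>v\<in>V. of_bool (u \<noteq> v) * real (card (AD u v)))"
    using XY card_Yset by simp
  finally show ?thesis by simp
qed

lemma DT_bound: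
  assumes free: "Kss_free V E s" and s: "s \<ge> 2"
  shows "(\<Sum>u\<in>V. \<Sum>v\<in>V. of_bool (u \<noteq> v) * real (card (AD u v)))
    \<le> (\<Sum>u\<in>V. \<Sum>v\<in>V. of_bool (u \<noteq> v) * real (cn u v)^2) / 8
      + real (s * 16^s) * (\<Sum>u\<in>V. \<Sum>v\<in>V. of_bool (u \<noteq> v) * real (cn u v))"
proof -
  have "(\<Sum>u\<in>V. \<Sum>v\<in>V. of_bool (u \<noteq> v) * real (card (AD u v)))
     \<le> (\<Sum>u\<in>V. \<Sum>v\<in>V. of_bool (u \<noteq> v) * (real (cn u v)^2/8 + real (s * 16^s) * real (cn u v)))"
    apply (intro sum_mono mult_left_mono)
    using pair_bound[OF free s] by (simp_all add: card_AD)
  also have "\<dots> = (\<Sum>u\<in>V. \<Sum>v\<in>V. of_bool (u \<noteq> v) * real (cn u v)^2) / 8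
      + real (s * 16^s) * (\<Sum>u\<in>V. \<Sum>v\<in>V. of_bool (u \<noteq> v) * real (cn u v))"
    by (simp add: sum.distrib sum_distrib_left sum_divide_distrib algebra_simps)
  finally show ?thesis .
qed

lemma Q_fiber: "card Qset \<le> 64 * num_induced_C4 V E"
proof -
  define f where "f = (\<lambda>(u::'a,v::'a,x::'a,y::'a). {u,x,v,y})"
  have memQ: "u \<in> V \<and> v \<in> V \<and> u \<noteq> v \<and> \<not> adj E u v \<and> adj E u x \<and> adj E v x \<and> adj E u y \<and> adj E v y
     \<and> x \<noteq> y \<and> \<not> adj E x y \<and> x \<in> V \<and> y \<in> V" if "(u,v,x,y) \<in> Qset" for u v x y
    using that unfolding Qset_def GD_def cnb_def by (auto split: if_splits)
  have finQ: "finite Qset"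
    by (rule finite_subset[of _ "V \<times> V \<times> V \<times> V"]) (auto dest: memQ simp: finV)
  have finI: "finite (induced_C4s V E)"
    by (rule finite_subset[of _ "Pow V"]) (auto simp: induced_C4s_def finV)
  have img: "f ` Qset \<subseteq> induced_C4s V E"
  proof
    fix S assume "S \<in> f ` Qset"
    then obtain u v x y where q: "(u,v,x,y) \<in> Qset" and S: "S = {u,x,v,y}" unfolding f_def by auto
    note m = memQ[OF q]
    have ne: "u \<noteq> x" "v \<noteq> x" "u \<noteq> y" "v \<noteq> y" using m adj_ne by blast+
    have "card S = 4" using S m ne by auto
    moreover have "adj E x v" "adj E y u" using m by (auto simp: insert_commute)
    ultimately show "S \<in> induced_C4s V E" unfolding induced_C4s_def using S m by blast
  qed
  have fib: "card {q\<in>Qset. f q = S} \<le> 64" if "S \<in> f ` Qset" for S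
  proof -
    obtain u v x y where q: "(u,v,x,y) \<in> Qset" and S: "S = {u,x,v,y}" using \<open>S \<in> f ` Qset\<close> unfolding f_def by auto
    note m = memQ[OF q]
    have ne: "u \<noteq> x" "v \<noteq> x" "u \<noteq> y" "v \<noteq> y" using m adj_ne by blast+
    have cS: "card S = 4" using S m ne by auto
    have finS: "finite S" using S by simp
    define g where "g = (\<lambda>(u::'a,v::'a,x::'a,y::'a). (u,v,x))"
    have inj: "inj_on g {q\<in>Qset. f q = S}"
    proof (rule inj_onI)
      fix q1 q2 assume q1: "q1 \<in> {q\<in>Qset. f q = S}" and q2: "q2 \<in> {q\<in>Qset. f q = S}" and gg: "g q1 = g q2"
      obtain u1 v1 x1 y1 where e1: "q1 = (u1,v1,x1,y1)" by (cases q1) auto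
      obtain u2 v2 x2 y2 where e2: "q2 = (u2,v2,x2,y2)" by (cases q2) auto
      have m1: "u1 \<noteq> v1" "x1 \<noteq> y1" "u1 \<noteq> y1" "v1 \<noteq> y1" using memQ[of u1 v1 x1 y1] q1 adj_ne unfolding e1 by auto
      have m2: "u2 \<noteq> v2" "x2 \<noteq> y2" "u2 \<noteq> y2" "v2 \<noteq> y2" using memQ[of u2 v2 x2 y2] q2 adj_ne unfolding e2 by auto
      have same: "u1 = u2" "v1 = v2" "x1 = x2" using gg unfolding e1 e2 g_def by auto
      have S1: "{u1,x1,v1,y1} = S" using q1 unfolding e1 f_def by simp
      have S2: "{u2,x2,v2,y2} = S" using q2 unfolding e2 f_def by simp
      have "y1 \<in> {u2,x2,v2,y2}" using S1 S2 by auto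
      then have "y1 = y2" using same m1 by auto
      then show "q1 = q2" using same e1 e2 by simp
    qed
    have "g ` {q\<in>Qset. f q = S} \<subseteq> S \<times> S \<times> S"
      unfolding g_def f_def by auto
    then have "card (g ` {q\<in>Qset. f q = S}) \<le> card (S \<times> S \<times> S)"
      using finS by (intro card_mono) simp_all
    also have "card (S \<times> S \<times> S) = 64" using cS by (simp add: card_cartesian_product)
    finally show ?thesis using card_image[OF inj] by simp
  qed
  have "Qset = (\<Union>S\<in>f ` Qset. {q\<in>Qset. f q = S})" by auto
  then have "card Qset \<le> (\<Sum>S\<in>f ` Qset. card {q\<in>Qset. f q = S})"
    using card_UN_le[of "f ` Qset" "\<lambda>S. {q\<in>Qset. f q = S}"] finQ by simp
  also have "\<dots> \<le> (\<Sum>S\<in>f ` Qset. 64)" by (rule sum_mono) (rule fib)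
  also have "\<dots> = 64 * card (f ` Qset)" by simp
  also have "\<dots> \<le> 64 * card (induced_C4s V E)" using card_mono[OF finI img] by simp
  finally show ?thesis unfolding num_induced_C4_def .
qed

end


lemma arith_s:
  assumes "s \<ge> (2::nat)"
  shows "4 * (1 + 2 * real (s * 16^s)) \<le> 3 * ((6::real)^s * real s)^2"
proof -
  have a: "2 * 16^s \<le> (36::nat)^s"
  proof -
    have "2 * 16^s \<le> 2^s * (16::nat)^s" using assms
      by (intro mult_right_mono) (simp_all add: self_le_power)
    also have "\<dots> = 32^s" by (simp add: power_mult_distrib[symmetric])
    also have "\<dots> \<le> 36^s" by (rule power_mono) simp_all
    finally show ?thesis .
  qed
  have b: "2 * s \<le> s * s" using assms by simp
  have "4 * (1 + 2 * (s * 16^s)) = 4 + 8 * s * 16^s" by simp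
  also have "\<dots> \<le> 12 * s * 16^s"
  proof -
    have "1 \<le> s * 16^s" using assms by simp
    then show ?thesis by simp
  qed
  also have "\<dots> = 6 * (2 * s) * 16^s" by simp
  also have "\<dots> \<le> 6 * (s * s) * 16^s" using b by simp
  also have "\<dots> = 3 * (s * s) * (2 * 16^s)" by simp
  also have "\<dots> \<le> 3 * (s * s) * 36^s" using a by simp
  finally have "4 * (1 + 2 * (s * 16^s)) \<le> 3 * (s * s) * 36^s" .
  then have "real (4 * (1 + 2 * (s * 16^s))) \<le> real (3 * (s * s) * 36^s)" by (simp only: of_nat_le_iff)
  moreover have "((6::real)^s * real s)^2 = real (s * s * 36^s)"
    by (simp add: power_mult_distrib power2_eq_square power_mult[symmetric] mult.commute)
       (simp add: power_mult_distrib[symmetric])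
  ultimately show ?thesis by simp
qed

theorem theorem5p2:
  fixes V :: "'a set" and E :: "'a set set" and s n :: nat
  assumes "simple_graph V E"
    and "s > 0"
    and "card V = n"
    and "Kss_free V E s"
    and "real (card E) > 6 ^ s * real s * real n powr (3/2)"
  shows "real (num_induced_C4 V E) \<ge> real (card E) ^ 4 / (16 * real n ^ 4)"
proof -
  interpret sgraph V E by unfold_locales (rule assms(1))
  have "0 \<le> 6 ^ s * real s * real n powr (3/2)" by simp
  then have "card E > 0" using assms(5) by linarith
  then obtain e0 where "e0 \<in> E" by (metis card_gt_0_iff ex_in_conv)
  then obtain a b where ab: "e0 = {a,b}" "a \<noteq> b"
    using assms(1) unfolding simple_graph_def by (meson card_2_iff)
  have abE: "adj E a b" using ab \<open>e0 \<in> E\<close> by simp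
  have abV: "a \<in> V" "b \<in> V" using adj_in[OF abE] by auto
  have s2: "s \<ge> 2"
  proof (rule ccontr)
    assume "\<not> s \<ge> 2"
    then have "s = 1" using assms(2) by simp
    have "\<exists>A B. A \<subseteq> V \<and> B \<subseteq> V \<and> A \<inter> B = {} \<and>
       card A = s \<and> card B = s \<and> (\<forall>a\<in>A. \<forall>b\<in>B. adj E a b)"
    proof (intro exI conjI)
      show "{a} \<subseteq> V" "{b} \<subseteq> V" using abV by auto
      show "{a} \<inter> {b} = {}" using ab(2) by auto
      show "card {a} = s" "card {b} = s" using \<open>s = 1\<close> by auto
      show "\<forall>x\<in>{a}. \<forall>y\<in>{b}. adj E x y" using abE by auto
    qed
    then show False using assms(4) unfolding Kss_free_def by blast
  qed
  have n1: "n \<ge> 1" using abV finV assms(3) by (metis One_nat_def Suc_leI card_gt_0_iff empty_iff)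
  define e where "e = real (card E)"
  define nn where "nn = real n"
  define S1 where "S1 = (\<Sum>w\<in>V. real (deg w))"
  define Sq where "Sq = (\<Sum>w\<in>V. real (deg w)^2)"
  define P where "P = (\<Sum>u\<in>V. \<Sum>v\<in>V. of_bool (u \<noteq> v) * real (cn u v))"
  define S2 where "S2 = (\<Sum>u\<in>V. \<Sum>v\<in>V. of_bool (u \<noteq> v) * real (cn u v)^2)"
  define DT where "DT = (\<Sum>u\<in>V. \<Sum>v\<in>V. of_bool (u \<noteq> v) * real (card (AD u v)))"
  define \<beta> where "\<beta> = real (s * 16^s)"
  define q where "q = real (card Qset)"
  define N where "N = real (num_induced_C4 V E)"
  define K where "K = (6::real)^s * real s"
  have hP: "P = Sq - S1" unfolding P_def Sq_def S1_def by (rule P_eq)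
  have h1: "2 * e \<le> S1"
  proof -
    have "real (2 * card E) \<le> real (\<Sum>u\<in>V. deg u)" using handshake by (simp only: of_nat_le_iff)
    then show ?thesis unfolding e_def S1_def by simp
  qed
  have h2: "S1^2 \<le> nn * Sq"
    using cs_sum[OF finV, of "\<lambda>w. real (deg w)"] assms(3) unfolding S1_def Sq_def nn_def by simp
  have h3: "P^2 \<le> nn^2 * S2"
  proof -
    have "P^2 \<le> nn * (\<Sum>u\<in>V. (\<Sum>v\<in>V. of_bool (u \<noteq> v) * real (cn u v))^2)"
      using cs_sum[OF finV, of "\<lambda>u. (\<Sum>v\<in>V. of_bool (u \<noteq> v) * real (cn u v))"] assms(3)
      unfolding P_def nn_def by simp
    also have "\<dots> \<le> nn * (\<Sum>u\<in>V. nn * (\<Sum>v\<in>V. of_bool (u \<noteq> v) * real (cn u v)^2))"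
    proof (intro mult_left_mono sum_mono)
      fix u assume "u \<in> V"
      have "(\<Sum>v\<in>V. of_bool (u \<noteq> v) * real (cn u v))^2 \<le> nn * (\<Sum>v\<in>V. (of_bool (u \<noteq> v) * real (cn u v))^2)"
        using cs_sum[OF finV, of "\<lambda>v. of_bool (u \<noteq> v) * real (cn u v)"] assms(3) unfolding nn_def by simp
      also have "(\<Sum>v\<in>V. (of_bool (u \<noteq> v) * real (cn u v))^2) = (\<Sum>v\<in>V. of_bool (u \<noteq> v) * real (cn u v)^2)"
        by (rule sum.cong) (simp_all add: power_mult_distrib)
      finally show "(\<Sum>v\<in>V. of_bool (u \<noteq> v) * real (cn u v))^2 \<le> nn * (\<Sum>v\<in>V. of_bool (u \<noteq> v) * real (cn u v)^2)" .
    qed (simp add: nn_def)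
    also have "\<dots> = nn^2 * S2" unfolding S2_def by (simp add: sum_distrib_left[symmetric] power2_eq_square)
    finally show ?thesis .
  qed
  have h4: "q \<ge> S2 - P - 2 * DT" unfolding q_def S2_def P_def DT_def by (rule count_bound)
  have h5: "DT \<le> S2 / 8 + \<beta> * P" unfolding DT_def S2_def \<beta>_def P_def by (rule DT_bound[OF assms(4) s2])
  have h6: "q \<le> 64 * N" unfolding q_def N_def using Q_fiber by (metis of_nat_le_iff of_nat_mult of_nat_numeral)
  have h7: "e > K * nn powr (3/2)" using assms(5) unfolding e_def K_def nn_def by simp
  have nn1: "nn \<ge> 1" using n1 unfolding nn_def by simp
  have pw: "nn \<le> nn powr (3/2)" using powr_mono[of 1 "3/2" nn] nn1 by (simp add: powr_one)
  have pw2: "(nn powr (3/2))^2 = nn^3"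
  proof -
    have "(nn powr (3/2))^2 = nn powr (real 2 * (3/2))" using nn1 by (intro powr_power) simp
    also have "\<dots> = nn powr 3" by simp
    also have "\<dots> = nn^3" using nn1 by simp
    finally show ?thesis .
  qed
  have K72: "K \<ge> 72"
  proof -
    have "(6::real)^2 \<le> 6^s" using s2 by (intro power_increasing) simp_all
    moreover have "real s \<ge> 2" using s2 by simp
    ultimately have "(6::real)^2 * 2 \<le> 6^s * real s" by (intro mult_mono) simp_all
    then show ?thesis unfolding K_def by simp
  qed
  have e2n: "e \<ge> 2 * nn"
  proof -
    have "K * nn powr (3/2) \<ge> 72 * nn" using K72 pw nn1 by (intro mult_mono) simp_all
    then show ?thesis using h7 nn1 by linarith
  qed
  have eK: "e^2 \<ge> K^2 * nn^3"
  proof -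
    have "0 \<le> K * nn powr (3/2)" using K72 by simp
    then have "(K * nn powr (3/2))^2 \<le> e^2" using h7 by (intro power_mono) simp_all
    then show ?thesis by (simp add: power_mult_distrib pw2)
  qed
  have e0: "e \<ge> 0" unfolding e_def by simp
  have nnP: "nn * P \<ge> 3 * e^2"
  proof -
    have x1: "nn * P = nn * Sq - nn * S1" unfolding hP by (simp add: right_diff_distrib)
    have x2: "S1^2 - nn * S1 = (S1 - 2*e) * (S1 + 2*e - nn) + (4*e^2 - 2*e*nn)"
      by (simp add: algebra_simps power2_eq_square)
    have x3: "(S1 - 2*e) * (S1 + 2*e - nn) \<ge> 0" using h1 e2n e0 by (intro mult_nonneg_nonneg) simp_all
    have x4: "4*e^2 - 2*e*nn \<ge> 3 * e^2"
    proof -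
      have "e * (2*nn) \<le> e * e" using e2n e0 by (intro mult_left_mono) simp_all
      then show ?thesis by (simp add: power2_eq_square algebra_simps)
    qed
    show ?thesis using x1 x2 x3 x4 h2 by linarith
  qed
  have P0: "P \<ge> 0"
  proof -
    have "nn * P \<ge> 0" using nnP by (smt (verit) zero_le_power2)
    then show ?thesis using nn1 by (simp add: zero_le_mult_iff)
  qed
  have Pbig: "4 * (1 + 2 * \<beta>) * nn^2 \<le> P"
  proof -
    have "nn * (3 * K^2 * nn^2) = 3 * (K^2 * nn^3)" by (simp add: power2_eq_square power3_eq_cube algebra_simps)
    also have "\<dots> \<le> 3 * e^2" using eK by simp
    also have "\<dots> \<le> nn * P" by (rule nnP)
    finally have "3 * K^2 * nn^2 \<le> P" using nn1 by (simp add: mult_le_cancel_left)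
    moreover have "4 * (1 + 2 * \<beta>) \<le> 3 * K^2" unfolding \<beta>_def K_def by (rule arith_s[OF s2])
    ultimately show ?thesis using nn1 by (meson mult_right_mono order_trans zero_le_power2)
  qed
  have main: "2 * (nn^2 * q) \<ge> P^2"
  proof -
    have q1: "q \<ge> (3/4) * S2 - (1 + 2*\<beta>) * P" using h4 h5 by (simp add: algebra_simps)
    have "nn^2 * q \<ge> nn^2 * ((3/4) * S2 - (1 + 2*\<beta>) * P)" using q1 by (intro mult_left_mono) simp_all
    moreover have "nn^2 * ((3/4) * S2 - (1 + 2*\<beta>) * P) = (3/4) * (nn^2 * S2) - ((1 + 2*\<beta>) * nn^2) * P"
      by (simp add: algebra_simps)
    moreover have "((1 + 2*\<beta>) * nn^2) * P \<le> (P/4) * P"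
    proof -
      have "4 * ((1 + 2*\<beta>) * nn^2) \<le> P" using Pbig by (simp only: mult.assoc)
      then have "(1 + 2*\<beta>) * nn^2 \<le> P/4" by linarith
      then show ?thesis using P0 by (rule mult_right_mono)
    qed
    ultimately have "nn^2 * q \<ge> (3/4) * P^2 - (P/4) * P" using h3 by (simp add: power2_eq_square)
    then show ?thesis by (simp add: power2_eq_square algebra_simps)
  qed
  have fin: "2 * (nn^4 * q) \<ge> 9 * e^4"
  proof -
    have "(3 * e^2)^2 \<le> (nn * P)^2" using nnP e0 by (intro power_mono) simp_all
    also have "(nn * P)^2 = nn^2 * P^2" by (simp add: power_mult_distrib)
    also have "\<dots> \<le> nn^2 * (2 * (nn^2 * q))" using main by (intro mult_left_mono) simp_all
    finally show ?thesis by (simp add: power2_eq_square algebra_simps eval_nat_numeral)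
  qed
  have "e^4 \<le> N * (16 * nn^4)"
  proof -
    have a: "q * nn^4 \<le> (64 * N) * nn^4" using h6 by (rule mult_right_mono) simp
    have b: "9 * e^4 \<le> 2 * (q * nn^4)" using fin by (simp only: ac_simps)
    have c: "N * (16 * nn^4) = 16 * (N * nn^4)" "(64 * N) * nn^4 = 64 * (N * nn^4)" by simp_all
    have d: "N * nn^4 \<ge> 0" unfolding N_def by simp
    show ?thesis using a b c d by linarith
  qed
  then have "e^4 / (16 * nn^4) \<le> N" using nn1 by (simp add: divide_le_eq)
  then show ?thesis unfolding e_def nn_def N_def .
qed


end
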